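(* Let $n\ge 1$, let $f=(f_1,\dots,f_n):\{0,1\}^n\to\{0,1\}^n$ be a Boolean model, and let $h$ be a multivalued refinement of $f$ on $X=\prod_{j=1}^n\{0,1,\dots,m_j\}$ (with $m_j\ge 1$ integers, at least one $m_j>1$) built by the threshold construction described in the context. Let $J=\{j\in\{1,\dots,n\}: m_j>1\}$ and suppose that no component $g_j$ with $j\in J$ is self-inhibited. Let $a,a'\in\{0,1\}^n$, and let $b,b'\in X$ be obtained from $a$ (resp. $a'$) by replacing, for each $j\in J$, the coordinate $a_j$ (resp. $a'_j$) by $m_j$ whenever it equals $1$ (other coordinates unchanged). If there exists a trajectory from $a$ to $a'$ in the asynchronous state transition graph of $f$, then there exists a trajectory from $b$ to $b'$ in the asynchronous state transition graph of $h$.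
   Context: Components $g_1,\dots,g_n$; a state $x$ gives activity levels $x_j$. Asynchronous dynamics of a map $h:X\to X$ (Boolean or multivalued, $X=\prod_j\{0,\dots,m_j\}$ with $h_j(x)-x_j\in\{-1,0,1\}$): there is a transition $x\to y$ if there is $i_0$ with $x_{i_0}\neq h_{i_0}(x)$, $y_{i_0}=x_{i_0}+\mathrm{sign}(h_{i_0}(x)-x_{i_0})$, and $y_j=x_j$ for $j\ne i_0$. A trajectory is a finite sequence of consecutive transitions. For $x\in X$, $\alpha(x)=\{x'\in\{0,1\}^n:\forall j,\ (x_j=0\Rightarrow x'_j=0)\text{ and }(x_j=m_j\Rightarrow x'_j=1)\}$. A multivalued model $h:X\to X$ (with $h_j(x)-x_j\in\{-1,0,1\}$) is a refinement of $f$ if for all $x\in X$ and $j$: $h_j(x)<x_j\Rightarrow\exists x'\in\alpha(x),\ f_j(x')<x'_j$, and $h_j(x)>x_j\Rightarrow\exists x'\in\alpha(x),\ f_j(x')>x'_j$. Threshold construction: write each $f_{j_0}$ in a shortest disjunctive normal form $f_{j_0}(x)=\bigvee_{h}\bigwedge_{k} w_{j_0,h,k}x_{j_{j_0,h,k}}$, where each $w$ is either empty or negation $\neg$. For each literal with variable index $j=j_{j_0,h,k}$ such that $m_j>1$, choose a threshold $s\in\{0,\dots,m_j-1\}$ and replace the literal $x_j$ by the condition $x_j\ge s+1$ and the literal $\neg x_j$ by $x_j<s+1$ (literals with $m_j=1$ are unchanged). This yields a Boolean-valued function on $X$; set $\mathcal H_{j_0}(x)=+1$ if it is true and $-1$ otherwise,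 and define $h_j(x)=\max(0,\min(m_j,x_j+\mathcal H_j(x)))$. Component $g_j$ is self-inhibited if the literal $\neg x_j$ occurs in the (shortest DNF of) $f_j$. *)

theory Defs
  imports Main
begin

text \<open>Components are indexed by 0..<n. A state is a function nat => nat; only the
coordinates j < n are meaningful, the others are fixed to 0.
Boolean states are the states of the space with all m j = 1.\<close>

definition state_space :: "nat \<Rightarrow> (nat \<Rightarrow> nat) \<Rightarrow> (nat \<Rightarrow> nat) set" where
  "state_space n m = {x. (\<forall>j<n. x j \<le> m j) \<and> (\<forall>j\<ge>n. x j = 0)}"

abbreviation bool_space :: "nat \<Rightarrow> (nat \<Rightarrow> nat) set" where
  "bool_space n \<equiv> state_space n (\<lambda>_. 1)"

definition async_trans ::
  "nat \<Rightarrow> (nat \<Rightarrow> nat) \<Rightarrow> ((nat \<Rightarrow> nat) \<Rightarrow> nat \<Rightarrow> nat) \<Rightarrow> (nat \<Rightarrow> nat) \<Rightarrow> (nat \<Rightarrow> nat) \<Rightarrow> bool" where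
  "async_trans n m g x y \<longleftrightarrow> x \<in> state_space n m \<and>
     (\<exists>i<n. x i \<noteq> g x i \<and> y = x(i := (if g x i > x i then x i + 1 else x i - 1)))"

definition trajectory ::
  "nat \<Rightarrow> (nat \<Rightarrow> nat) \<Rightarrow> ((nat \<Rightarrow> nat) \<Rightarrow> nat \<Rightarrow> nat) \<Rightarrow> (nat \<Rightarrow> nat) \<Rightarrow> (nat \<Rightarrow> nat) \<Rightarrow> bool" where
  "trajectory n m g x y \<longleftrightarrow> (async_trans n m g)\<^sup>*\<^sup>* x y"

definition alpha :: "nat \<Rightarrow> (nat \<Rightarrow> nat) \<Rightarrow> (nat \<Rightarrow> nat) \<Rightarrow> (nat \<Rightarrow> nat) set" where
  "alpha n m x = {x' \<in> bool_space n. \<forall>j<n. (x j = 0 \<longrightarrow> x' j = 0) \<and> (x j = m j \<longrightarrow> x' j = 1)}"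

definition refinement ::
  "nat \<Rightarrow> (nat \<Rightarrow> nat) \<Rightarrow> ((nat \<Rightarrow> nat) \<Rightarrow> nat \<Rightarrow> nat) \<Rightarrow> ((nat \<Rightarrow> nat) \<Rightarrow> nat \<Rightarrow> nat) \<Rightarrow> bool" where
  "refinement n m h f \<longleftrightarrow> (\<forall>x\<in>state_space n m. \<forall>j<n.
      (h x j < x j \<longrightarrow> (\<exists>x'\<in>alpha n m x. f x' j < x' j)) \<and>
      (h x j > x j \<longrightarrow> (\<exists>x'\<in>alpha n m x. f x' j > x' j)))"

text \<open>Disjunctive normal forms: a literal is (variable index, polarity), True meaning
x_j and False meaning the negation of x_j; a clause is a conjunction (list) of literals,
a DNF a disjunction (list) of clauses.\<close>
type_synonym literal = "nat \<times> bool"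
type_synonym dnf = "literal list list"

definition dnf_vars_ok :: "nat \<Rightarrow> dnf \<Rightarrow> bool" where
  "dnf_vars_ok n D \<longleftrightarrow> (\<forall>c\<in>set D. \<forall>l\<in>set c. fst l < n)"

definition eval_dnf :: "dnf \<Rightarrow> (nat \<Rightarrow> nat) \<Rightarrow> bool" where
  "eval_dnf D x \<longleftrightarrow> (\<exists>c\<in>set D. \<forall>l\<in>set c. (x (fst l) = 1) = snd l)"

definition dnf_size :: "dnf \<Rightarrow> nat" where
  "dnf_size D = sum_list (map length D)"

definition represents :: "nat \<Rightarrow> ((nat \<Rightarrow> nat) \<Rightarrow> nat \<Rightarrow> nat) \<Rightarrow> nat \<Rightarrow> dnf \<Rightarrow> bool" where
  "represents n f j D \<longleftrightarrow> dnf_vars_ok n D \<and> (\<forall>x\<in>bool_space n. (f x j = 1) = eval_dnf D x)"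

definition shortest_dnf :: "nat \<Rightarrow> ((nat \<Rightarrow> nat) \<Rightarrow> nat \<Rightarrow> nat) \<Rightarrow> nat \<Rightarrow> dnf \<Rightarrow> bool" where
  "shortest_dnf n f j D \<longleftrightarrow> represents n f j D \<and>
     (\<forall>D'. represents n f j D' \<longrightarrow> dnf_size D \<le> dnf_size D')"

definition boolean_model :: "nat \<Rightarrow> ((nat \<Rightarrow> nat) \<Rightarrow> nat \<Rightarrow> nat) \<Rightarrow> bool" where
  "boolean_model n f \<longleftrightarrow> (\<forall>x\<in>bool_space n. \<forall>j<n. f x j \<le> 1)"

text \<open>Threshold construction. thr j0 h k is the threshold s attached to the k-th literal
of the h-th clause of the DNF D j0; for a variable j with m j > 1 it must lie in
{0..m j - 1}; literals of variables with m j = 1 are unchanged (x_j is read as x_j = 1).\<close>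
definition lit_holds :: "(nat \<Rightarrow> nat) \<Rightarrow> literal \<Rightarrow> nat \<Rightarrow> (nat \<Rightarrow> nat) \<Rightarrow> bool" where
  "lit_holds m l s x \<longleftrightarrow>
     (if m (fst l) > 1 then (x (fst l) \<ge> s + 1) = snd l else (x (fst l) = 1) = snd l)"

definition threshold_cond ::
  "(nat \<Rightarrow> nat) \<Rightarrow> (nat \<Rightarrow> dnf) \<Rightarrow> (nat \<Rightarrow> nat \<Rightarrow> nat \<Rightarrow> nat) \<Rightarrow> nat \<Rightarrow> (nat \<Rightarrow> nat) \<Rightarrow> bool" where
  "threshold_cond m D thr j0 x \<longleftrightarrow>
     (\<exists>h<length (D j0). \<forall>k<length (D j0 ! h). lit_holds m (D j0 ! h ! k) (thr j0 h k) x)"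

definition thresholds_ok :: "nat \<Rightarrow> (nat \<Rightarrow> nat) \<Rightarrow> (nat \<Rightarrow> dnf) \<Rightarrow> (nat \<Rightarrow> nat \<Rightarrow> nat \<Rightarrow> nat) \<Rightarrow> bool" where
  "thresholds_ok n m D thr \<longleftrightarrow> (\<forall>j0<n. \<forall>h<length (D j0). \<forall>k<length (D j0 ! h).
      m (fst (D j0 ! h ! k)) > 1 \<longrightarrow> thr j0 h k < m (fst (D j0 ! h ! k)))"

text \<open>h_j(x) = max(0, min(m_j, x_j + H_j(x))) with H_j = +1 / -1.\<close>
definition threshold_model ::
  "nat \<Rightarrow> (nat \<Rightarrow> nat) \<Rightarrow> (nat \<Rightarrow> dnf) \<Rightarrow> (nat \<Rightarrow> nat \<Rightarrow> nat \<Rightarrow> nat) \<Rightarrow> (nat \<Rightarrow> nat) \<Rightarrow> nat \<Rightarrow> nat" where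
  "threshold_model n m D thr x j =
     (if j < n then (if threshold_cond m D thr j x then min (m j) (x j + 1) else x j - 1) else x j)"

definition self_inhibited :: "(nat \<Rightarrow> dnf) \<Rightarrow> nat \<Rightarrow> bool" where
  "self_inhibited D j \<longleftrightarrow> (\<exists>c\<in>set (D j). (j, False) \<in> set c)"

definition lift_state :: "nat \<Rightarrow> (nat \<Rightarrow> nat) \<Rightarrow> (nat \<Rightarrow> nat) \<Rightarrow> nat \<Rightarrow> nat" where
  "lift_state n m a j = (if j < n \<and> m j > 1 \<and> a j = 1 then m j else a j)"

end

theory Submission
  imports Defs
begin

context
  fixes n :: nat and m :: "nat \<Rightarrow> nat"
    and f h :: "(nat \<Rightarrow> nat) \<Rightarrow> nat \<Rightarrow> nat"
    and D :: "nat \<Rightarrow> dnf" and thr :: "nat \<Rightarrow> nat \<Rightarrow> nat \<Rightarrow> nat"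
  assumes bm: "boolean_model n f"
    and mpos: "\<forall>j<n. m j \<ge> 1"
    and rep: "\<forall>j<n. represents n f j (D j)"
    and tok: "thresholds_ok n m D thr"
    and nsi: "\<forall>j<n. m j > 1 \<longrightarrow> \<not> self_inhibited D j"
    and hdef: "h = threshold_model n m D thr"
begin

lemma lift_in:
  assumes "x \<in> bool_space n"
  shows "lift_state n m x \<in> state_space n m"
  using assms mpos unfolding state_space_def lift_state_def by auto

lemma lift_upd_in:
  assumes "x \<in> bool_space n" "i < n" "v \<le> m i"
  shows "(lift_state n m x)(i := v) \<in> state_space n m"
  using lift_in[OF assms(1)] assms unfolding state_space_def by auto

lemma lit_eq:
  assumes x: "x \<in> bool_space n" and j: "fst l < n" "fst l \<noteq> i"
    and s: "m (fst l) > 1 \<longrightarrow> s < m (fst l)"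
  shows "lit_holds m l s ((lift_state n m x)(i := v)) \<longleftrightarrow> (x (fst l) = 1) = snd l"
proof -
  have "x (fst l) \<le> 1" using x j unfolding state_space_def by auto
  then show ?thesis using j s unfolding lit_holds_def lift_state_def
    by (cases "x (fst l) = 1") auto
qed

lemma cond_up:
  assumes x: "x \<in> bool_space n" and i: "i < n" "m i > 1" "x i = 0" "f x i = 1"
  shows "threshold_cond m D thr i ((lift_state n m x)(i := v))"
proof -
  have "(f x i = 1) = eval_dnf (D i) x" using rep i x unfolding represents_def by blast
  then have ev: "eval_dnf (D i) x" using i by simp
  then obtain c where c: "c \<in> set (D i)" "\<forall>l\<in>set c. (x (fst l) = 1) = snd l"
    unfolding eval_dnf_def by auto
  then obtain hh where hh: "hh < length (D i)" "D i ! hh = c" by (metis in_set_conv_nth)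
  have vok: "\<forall>l\<in>set c. fst l < n" using rep i c(1) unfolding represents_def dnf_vars_ok_def by blast
  have nsc: "(i, False) \<notin> set c" using nsi i c(1) unfolding self_inhibited_def by blast
  show ?thesis unfolding threshold_cond_def
  proof (intro exI[of _ hh] conjI allI impI)
    show "hh < length (D i)" by fact
    fix k assume k: "k < length (D i ! hh)"
    let ?l = "D i ! hh ! k"
    have lc: "?l \<in> set c" using k hh by auto
    have ne: "fst ?l \<noteq> i"
    proof
      assume e: "fst ?l = i"
      have "(x (fst ?l) = 1) = snd ?l" using c(2) lc by blast
      then have "(x i = 1) = snd ?l" by (simp only: e)
      then have "snd ?l = False" using i by auto
      then have "?l = (i, False)" using e by (cases ?l) auto
      then show False using nsc lc by simp
    qed
    have s: "m (fst ?l) > 1 \<longrightarrow> thr i hh k < m (fst ?l)"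
      using tok i hh k unfolding thresholds_ok_def by blast
    have fl: "fst ?l < n" using vok lc by blast
    have "(x (fst ?l) = 1) = snd ?l" using c(2) lc by blast
    then show "lit_holds m ?l (thr i hh k) ((lift_state n m x)(i := v))"
      by (simp add: lit_eq[OF x fl ne s])
  qed
qed

lemma cond_down:
  assumes x: "x \<in> bool_space n" and i: "i < n" "m i > 1" "x i = 1" "f x i = 0"
  shows "\<not> threshold_cond m D thr i ((lift_state n m x)(i := v))"
proof
  assume "threshold_cond m D thr i ((lift_state n m x)(i := v))"
  then obtain hh where hh: "hh < length (D i)"
    and all: "\<forall>k<length (D i ! hh). lit_holds m (D i ! hh ! k) (thr i hh k) ((lift_state n m x)(i := v))"
    unfolding threshold_cond_def by auto
  let ?c = "D i ! hh"
  have c: "?c \<in> set (D i)" using hh by auto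
  have "(f x i = 1) = eval_dnf (D i) x" using rep i x unfolding represents_def by blast
  then have ev: "\<not> eval_dnf (D i) x" using i by simp
  then obtain l where l: "l \<in> set ?c" "(x (fst l) = 1) \<noteq> snd l"
    using c unfolding eval_dnf_def by blast
  then obtain k where k: "k < length ?c" "?c ! k = l" by (metis in_set_conv_nth)
  have vok: "fst l < n" using rep i c l unfolding represents_def dnf_vars_ok_def by blast
  have nsc: "(i, False) \<notin> set ?c" using nsi i c unfolding self_inhibited_def by blast
  have ne: "fst l \<noteq> i"
  proof
    assume e: "fst l = i"
    then have "snd l = False" using l i by auto
    then have "l = (i, False)" using e by (cases l) auto
    then show False using nsc l by simp
  qed
  have s: "m (fst l) > 1 \<longrightarrow> thr i hh k < m (fst l)"
    using tok i hh k unfolding thresholds_ok_def by blast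
  show False using lit_eq[OF x vok ne s, of v] all k l by auto
qed

lemma cond_iff:
  assumes x: "x \<in> bool_space n" and j: "j < n"
  shows "threshold_cond m D thr j (lift_state n m x) \<longleftrightarrow> eval_dnf (D j) x"
proof -
  have x0: "(lift_state n m x)(n := 0) = lift_state n m x"
    using x unfolding lift_state_def state_space_def by (auto simp: fun_eq_iff)
  have vok: "\<forall>c\<in>set (D j). \<forall>l\<in>set c. fst l < n"
    using rep j unfolding represents_def dnf_vars_ok_def by blast
  have L: "lit_holds m (D j ! hh ! k) (thr j hh k) (lift_state n m x) \<longleftrightarrow> (x (fst (D j ! hh ! k)) = 1) = snd (D j ! hh ! k)"
    if "hh < length (D j)" "k < length (D j ! hh)" for hh k
  proof -
    have "D j ! hh ! k \<in> set (D j ! hh)" "D j ! hh \<in> set (D j)" using that by auto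
    then have f: "fst (D j ! hh ! k) < n" using vok by blast
    have s: "m (fst (D j ! hh ! k)) > 1 \<longrightarrow> thr j hh k < m (fst (D j ! hh ! k))"
      using tok j that unfolding thresholds_ok_def by blast
    show ?thesis using lit_eq[OF x f _ s, of n 0] f x0 by simp
  qed
  show ?thesis
  proof
    assume "threshold_cond m D thr j (lift_state n m x)"
    then obtain hh where hh: "hh < length (D j)"
      and a: "\<forall>k<length (D j ! hh). lit_holds m (D j ! hh ! k) (thr j hh k) (lift_state n m x)"
      unfolding threshold_cond_def by auto
    have "\<forall>l\<in>set (D j ! hh). (x (fst l) = 1) = snd l"
    proof
      fix l assume "l \<in> set (D j ! hh)"
      then obtain k where "k < length (D j ! hh)" "D j ! hh ! k = l" by (metis in_set_conv_nth)
      then show "(x (fst l) = 1) = snd l" using a L[OF hh] by blast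
    qed
    moreover have "D j ! hh \<in> set (D j)" using hh by simp
    ultimately show "eval_dnf (D j) x" unfolding eval_dnf_def by blast
  next
    assume "eval_dnf (D j) x"
    then obtain c where c: "c \<in> set (D j)" "\<forall>l\<in>set c. (x (fst l) = 1) = snd l"
      unfolding eval_dnf_def by blast
    then obtain hh where hh: "hh < length (D j)" "D j ! hh = c" by (metis in_set_conv_nth)
    have "\<forall>k<length (D j ! hh). lit_holds m (D j ! hh ! k) (thr j hh k) (lift_state n m x)"
      using L[OF hh(1)] c(2) hh(2) by auto
    then show "threshold_cond m D thr j (lift_state n m x)"
      unfolding threshold_cond_def using hh(1) by blast
  qed
qed

lemma walk_up:
  assumes x: "x \<in> bool_space n" and i: "i < n" "m i > 1" "x i = 0" "f x i = 1"
  shows "k \<le> m i \<Longrightarrow> trajectory n m h ((lift_state n m x)(i := 0)) ((lift_state n m x)(i := k))"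
proof (induction k)
  case 0 then show ?case unfolding trajectory_def by simp
next
  case (Suc k)
  let ?y = "(lift_state n m x)(i := k)"
  have "async_trans n m h ?y ((lift_state n m x)(i := Suc k))"
    unfolding async_trans_def
  proof (intro conjI exI[of _ i])
    show "?y \<in> state_space n m" using lift_upd_in[OF x i(1)] Suc by auto
    have "h ?y i = Suc k" using cond_up[OF x i, of k] i Suc unfolding hdef threshold_model_def by auto
    then show "i < n" "?y i \<noteq> h ?y i"
      "(lift_state n m x)(i := Suc k) = ?y(i := if h ?y i > ?y i then ?y i + 1 else ?y i - 1)"
      using i by auto
  qed
  then show ?case using Suc unfolding trajectory_def by auto
qed

lemma walk_down:
  assumes x: "x \<in> bool_space n" and i: "i < n" "m i > 1" "x i = 1" "f x i = 0"
  shows "k \<le> m i \<Longrightarrow> trajectory n m h ((lift_state n m x)(i := m i)) ((lift_state n m x)(i := m i - k))"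
proof (induction k)
  case 0 then show ?case unfolding trajectory_def by simp
next
  case (Suc k)
  let ?y = "(lift_state n m x)(i := m i - k)"
  have "async_trans n m h ?y ((lift_state n m x)(i := m i - Suc k))"
    unfolding async_trans_def
  proof (intro conjI exI[of _ i])
    show "?y \<in> state_space n m" using lift_upd_in[OF x i(1)] Suc by auto
    have "h ?y i = m i - k - 1" using cond_down[OF x i, of "m i - k"] i Suc unfolding hdef threshold_model_def by auto
    then show "i < n" "?y i \<noteq> h ?y i"
      "(lift_state n m x)(i := m i - Suc k) = ?y(i := if h ?y i > ?y i then ?y i + 1 else ?y i - 1)"
      using i Suc by auto
  qed
  then show ?case using Suc unfolding trajectory_def by auto
qed

lemma step_lift:
  assumes "async_trans n (\<lambda>_. 1) f y z"
  shows "trajectory n m h (lift_state n m y) (lift_state n m z)"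
proof -
  from assms obtain i where y: "y \<in> bool_space n" and i: "i < n" "y i \<noteq> f y i"
    and z: "z = y(i := (if f y i > y i then y i + 1 else y i - 1))"
    unfolding async_trans_def by blast
  have yi: "y i \<le> 1" "f y i \<le> 1" using y i bm unfolding state_space_def boolean_model_def by auto
  show ?thesis
  proof (cases "m i > 1")
    case True
    show ?thesis
    proof (cases "y i = 0")
      case y0: True
      then have f1: "f y i = 1" using i yi by auto
      have "lift_state n m y = (lift_state n m y)(i := 0)"
        using y0 unfolding lift_state_def by auto
      moreover have "lift_state n m z = (lift_state n m y)(i := m i)"
        unfolding z using y0 f1 True i by (intro ext) (simp add: lift_state_def)
      ultimately show ?thesis using walk_up[OF y i(1) True y0 f1, of "m i"] by simp
    next
      case y1: False
      then have yy: "y i = 1" "f y i = 0" using i yi by auto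
      have "lift_state n m y = (lift_state n m y)(i := m i)"
        using yy True i unfolding lift_state_def by auto
      moreover have "lift_state n m z = (lift_state n m y)(i := m i - m i)"
        unfolding z using yy True i by (intro ext) (simp add: lift_state_def)
      ultimately show ?thesis using walk_down[OF y i(1) True yy, of "m i"] by simp
    qed
  next
    case False
    let ?b = "lift_state n m y"
    have bi: "?b i = y i" using False unfolding lift_state_def by auto
    have ci: "threshold_cond m D thr i ?b \<longleftrightarrow> f y i = 1"
    proof -
      have "(f y i = 1) = eval_dnf (D i) y" using rep i y unfolding represents_def by blast
      then show ?thesis using cond_iff[OF y i(1)] by simp
    qed
    have hb: "h ?b i = f y i"
      using ci bi yi i False mpos unfolding hdef threshold_model_def by auto
    have zeq: "lift_state n m z = ?b(i := (if h ?b i > ?b i then ?b i + 1 else ?b i - 1))"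
      unfolding z using bi hb False i by (intro ext) (simp add: lift_state_def)
    have ne: "?b i \<noteq> h ?b i" using i(2) bi hb by simp
    have "async_trans n m h ?b (lift_state n m z)"
      unfolding async_trans_def
      by (intro conjI exI[of _ i] lift_in[OF y] i(1) ne zeq)
    then show ?thesis unfolding trajectory_def by auto
  qed
qed

end

theorem proposition1:
  fixes n :: nat and m :: "nat \<Rightarrow> nat"
    and f h :: "(nat \<Rightarrow> nat) \<Rightarrow> nat \<Rightarrow> nat"
    and D :: "nat \<Rightarrow> dnf" and thr :: "nat \<Rightarrow> nat \<Rightarrow> nat \<Rightarrow> nat"
    and a a' :: "nat \<Rightarrow> nat"
  assumes "n \<ge> 1"
    and "boolean_model n f"
    and "\<forall>j<n. m j \<ge> 1"
    and "\<exists>j<n. m j > 1"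
    and "\<forall>j<n. shortest_dnf n f j (D j)"
    and "thresholds_ok n m D thr"
    and "h = threshold_model n m D thr"
    and "refinement n m h f"
    and "\<forall>j<n. m j > 1 \<longrightarrow> \<not> self_inhibited D j"
    and "a \<in> bool_space n" and "a' \<in> bool_space n"
    and "trajectory n (\<lambda>_. 1) f a a'"
  shows "trajectory n m h (lift_state n m a) (lift_state n m a')"
proof -
  have rep: "\<forall>j<n. represents n f j (D j)" using assms(5) unfolding shortest_dnf_def by auto
  have "(async_trans n (\<lambda>_. 1) f)\<^sup>*\<^sup>* a a'" using assms(12) unfolding trajectory_def .
  then show ?thesis
  proof (induction rule: rtranclp_induct)
    case base then show ?case unfolding trajectory_def by simp
  next
    case (step y z)
    have "trajectory n m h (lift_state n m y) (lift_state n m z)"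
      using step_lift[OF assms(2) assms(3) rep assms(6) assms(9) assms(7) step(2)] .
    then show ?case using step(3) unfolding trajectory_def by auto
  qed
qed

end
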